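(* Let $n=2m-1$, $m\ge1$, let $\mathcal{C}$ be the set of maximal flags and $\mathcal{P}$ the set of points of $\mathrm{PG}(n,q)$. For $i\in[n+1]$ let $T_i$ be the $|\mathcal{C}|\times|\mathcal{P}|$ matrix with $T_i(c,X)=1$ if $c$ has type $i$ with respect to $X$ and $0$ otherwise, and for $j\in[m]$ let $F_j=q^j\sum_{i=m-j+1}^{m}T_i-\sum_{i=m+1}^{m+j}T_i$. Let $E_1=I_{\mathcal{P}}-\frac1{|\mathcal{P}|}J_{\mathcal{P}}$. Then for every $j\in[m]$ there is a non-zero constant $\alpha_j$ with $T_{m-j+1}^\top F_j=\alpha_jE_1$, and $T_h^\top F_j=0$ for all $h<m-j+1$.
   Context: A maximal flag of $\mathrm{PG}(n,q)$ is $(U_1,\dots,U_n)$ with $U_1\subset\cdots\subset U_n$ subspaces of $\mathbb{F}_q^{n+1}$, $\dim U_i=i$. Its type with respect to a point $X$ is the smallest $k\in[n]$ with $X\subseteq U_k$, and $n+1$ otherwise. $I_{\mathcal{P}}$ and $J_{\mathcal{P}}$ are the identity and all-one matrices indexed by $\mathcal{P}$. *)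

theory Defs
  imports "HOL-Analysis.Analysis"
begin

text \<open>The ambient space is 'a^'n with 'a a finite field F_q and CARD('n) = n+1.
  Projective dimension n = CARD('n) - 1.\<close>

definition pg_points :: "('a::field ^ 'n) set set" where
  "pg_points = {U. vec.subspace U \<and> vec.dim U = 1}"

text \<open>A maximal flag (U_1,...,U_n) is represented as a list c of length n
  with c ! (i-1) = U_i.\<close>
definition max_flags :: "('a::field ^ 'n) set list set" where
  "max_flags = {c. length c = CARD('n) - 1 \<and>
      (\<forall>i<length c. vec.subspace (c ! i) \<and> vec.dim (c ! i) = i + 1) \<and>
      (\<forall>i. i + 1 < length c \<longrightarrow> c ! i \<subset> c ! (i + 1))}"

definition flag_type :: "('a::field ^ 'n) set list \<Rightarrow> ('a ^ 'n) set \<Rightarrow> nat" where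
  "flag_type c X = (if \<exists>k\<in>{1..length c}. X \<subseteq> c ! (k - 1)
      then LEAST k. k \<in> {1..length c} \<and> X \<subseteq> c ! (k - 1)
      else length c + 1)"

definition Tmat :: "nat \<Rightarrow> ('a::field ^ 'n) set list \<Rightarrow> ('a ^ 'n) set \<Rightarrow> real" where
  "Tmat i c X = (if flag_type c X = i then 1 else 0)"

definition Fmat :: "nat \<Rightarrow> nat \<Rightarrow> ('a::{finite,field} ^ 'n) set list \<Rightarrow> ('a ^ 'n) set \<Rightarrow> real" where
  "Fmat m j c X = real (CARD('a)) ^ j * (\<Sum>i = m - j + 1..m. Tmat i c X)
                  - (\<Sum>i = m + 1..m + j. Tmat i c X)"

definition E1mat :: "('a::field ^ 'n) set \<Rightarrow> ('a ^ 'n) set \<Rightarrow> real" where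
  "E1mat X Y = (if X = Y then 1 else 0) - 1 / real (card (pg_points :: ('a ^ 'n) set set))"

definition transp_mult ::
  "(('a::field ^ 'n) set list \<Rightarrow> ('a ^ 'n) set \<Rightarrow> real) \<Rightarrow>
   (('a ^ 'n) set list \<Rightarrow> ('a ^ 'n) set \<Rightarrow> real) \<Rightarrow> ('a ^ 'n) set \<Rightarrow> ('a ^ 'n) set \<Rightarrow> real" where
  "transp_mult A B X Y = (\<Sum>c\<in>(max_flags :: ('a ^ 'n) set list set). A c X * B c Y)"

end

theory Submission
  imports Defs
begin


lemma card_subspace:
  fixes V :: "('a::{finite,field} ^ 'n) set"
  assumes "vec.subspace V"
  shows "card V = CARD('a) ^ vec.dim V"
proof -
  obtain B where B: "B \<subseteq> V" "vec.independent B" "V \<subseteq> vec.span B" "card B = vec.dim V"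
    using vec.basis_exists by blast
  have fB: "finite B" by simp
  have VB: "V = vec.span B"
    using B assms vec.span_minimal by blast
  let ?phi = "\<lambda>u. \<Sum>v\<in>B. u v *s v"
  have img: "?phi ` (PiE B (\<lambda>_. UNIV)) = V"
  proof
    show "?phi ` (PiE B (\<lambda>_. UNIV)) \<subseteq> V"
      using VB vec.span_finite[OF fB] by auto
    show "V \<subseteq> ?phi ` (PiE B (\<lambda>_. UNIV))"
    proof
      fix x assume "x \<in> V"
      then obtain u where u: "x = ?phi u" using VB vec.span_finite[OF fB] by auto
      let ?u = "restrict u B"
      have e1: "?phi ?u = ?phi u" by (rule sum.cong) auto
      have e2: "?u \<in> PiE B (\<lambda>_. UNIV)" by auto
      show "x \<in> ?phi ` (PiE B (\<lambda>_. UNIV))" unfolding u using image_eqI[where f="?phi", OF e1[symmetric] e2] .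
    qed
  qed
  have inj: "inj_on ?phi (PiE B (\<lambda>_. UNIV))"
  proof (rule inj_onI)
    fix u w assume u: "u \<in> PiE B (\<lambda>_. UNIV)" and w: "w \<in> PiE B (\<lambda>_. UNIV)"
      and eq: "?phi u = ?phi w"
    have sz: "(\<Sum>v\<in>B. (u v - w v) *s v) = 0"
      using eq by (simp add: vector_sub_rdistrib sum_subtractf)
    have "\<forall>v\<in>B. u v - w v = 0"
    proof (rule ccontr)
      assume "\<not> (\<forall>v\<in>B. u v - w v = 0)"
      hence "vec.dependent B" unfolding vec.dependent_finite[OF fB]
        using sz by (intro exI[of _ "\<lambda>v. u v - w v"]) auto
      with B(2) show False by simp
    qed
    thus "u = w" using u w by (intro PiE_ext[OF u w]) simp
  qed
  have "card V = card (PiE B (\<lambda>_. (UNIV::'a set)))"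
    using card_image[OF inj] img by simp
  also have "\<dots> = CARD('a) ^ card B" by (simp add: card_PiE)
  finally show ?thesis using B(4) by simp
qed



definition Wset :: "('a::field ^ 'n) set \<Rightarrow> ('a ^ 'n) set \<Rightarrow> ('a ^ 'n) set set" where
  "Wset A B = {W. vec.subspace W \<and> vec.dim W = vec.dim A + 1 \<and> A \<subseteq> W \<and> W \<subseteq> B}"

lemma Wset_mem:
  fixes A B :: "('a::field ^ 'n) set"
  assumes "vec.subspace A" "vec.subspace B" "A \<subseteq> B" "v \<in> B" "v \<notin> A"
  shows "vec.span (insert v A) \<in> Wset A B" "v \<in> vec.span (insert v A)"
proof -
  have sA: "vec.span A = A" using assms(1) by simp
  have "vec.dim (vec.span (insert v A)) = vec.dim A + 1"
    using assms(5) sA by (simp only: vec.dim_insert vec.dim_span if_False)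
  moreover have "A \<subseteq> vec.span (insert v A)"
    using vec.span_superset by blast
  moreover have "vec.span (insert v A) \<subseteq> B"
    using assms vec.span_minimal by blast
  ultimately show "vec.span (insert v A) \<in> Wset A B" unfolding Wset_def by auto
  show "v \<in> vec.span (insert v A)" by (simp add: vec.span_base)
qed

lemma Wset_unique:
  fixes A B W :: "('a::field ^ 'n) set"
  assumes "vec.subspace A" "W \<in> Wset A B" "v \<in> W" "v \<notin> A"
  shows "W = vec.span (insert v A)"
proof -
  have W: "vec.subspace W" "vec.dim W = vec.dim A + 1" "A \<subseteq> W" using assms(2) unfolding Wset_def by auto
  have sA: "vec.span A = A" using assms(1) by simp
  have d: "vec.dim (vec.span (insert v A)) = vec.dim A + 1"
    using assms(4) sA by (simp only: vec.dim_insert vec.dim_span if_False)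
  have "vec.span (insert v A) \<subseteq> W" using W assms(3) vec.span_minimal by blast
  thus ?thesis using vec.subspace_dim_equal[of "vec.span (insert v A)" W] W d by simp
qed

lemma Wset_count:
  fixes A B :: "('a::{finite,field} ^ 'n) set"
  assumes "vec.subspace A" "vec.subspace B" "A \<subseteq> B"
  shows "card (Wset A B) * (CARD('a) ^ (vec.dim A + 1) - CARD('a) ^ vec.dim A)
          = CARD('a) ^ vec.dim B - CARD('a) ^ vec.dim A"
proof -
  have cover: "B - A = (\<Union>W\<in>Wset A B. W - A)"
  proof
    show "B - A \<subseteq> (\<Union>W\<in>Wset A B. W - A)"
      using Wset_mem[OF assms] by blast
    show "(\<Union>W\<in>Wset A B. W - A) \<subseteq> B - A" unfolding Wset_def by auto
  qed
  have disj: "(W1 - A) \<inter> (W2 - A) = {}" if "W1 \<in> Wset A B" "W2 \<in> Wset A B" "W1 \<noteq> W2" for W1 W2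
  proof (rule ccontr)
    assume "(W1 - A) \<inter> (W2 - A) \<noteq> {}"
    then obtain v where "v \<in> W1" "v \<in> W2" "v \<notin> A" by blast
    hence "W1 = W2" using Wset_unique[OF assms(1)] that by metis
    thus False using that by simp
  qed
  have cW: "card (W - A) = CARD('a) ^ (vec.dim A + 1) - CARD('a) ^ vec.dim A" if "W \<in> Wset A B" for W
  proof -
    have W: "vec.subspace W" "vec.dim W = vec.dim A + 1" "A \<subseteq> W" using that unfolding Wset_def by auto
    show ?thesis using card_Diff_subset[OF finite_subset[OF W(3)] W(3)] card_subspace[OF W(1)]
        card_subspace[OF assms(1)] W(2) by simp
  qed
  have "card (B - A) = CARD('a) ^ vec.dim B - CARD('a) ^ vec.dim A"
    using card_Diff_subset[OF finite_subset[OF assms(3)] assms(3)] card_subspace[OF assms(1)]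
        card_subspace[OF assms(2)] by simp
  also have "card (B - A) = (\<Sum>W\<in>Wset A B. card (W - A))"
    unfolding cover by (rule card_UN_disjoint) (simp_all add: disj)
  also have "\<dots> = card (Wset A B) * (CARD('a) ^ (vec.dim A + 1) - CARD('a) ^ vec.dim A)"
    using cW by simp
  finally show ?thesis .
qed



lemma dim_zero_space: "vec.dim ({0} :: ('a::field ^ 'n) set) = 0"
  by (simp add: vec.dim_singleton)

lemma pg_points_Wset: "(pg_points :: ('a::field ^ 'n) set set) = Wset {0} UNIV"
  unfolding pg_points_def Wset_def by (auto simp: dim_zero_space vec.subspace_0)

lemma Wset_zero: "Wset ({0} :: ('a::field ^ 'n) set) V = {X \<in> pg_points. X \<subseteq> V}"
  unfolding pg_points_def Wset_def by (auto simp: dim_zero_space vec.subspace_0)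

lemma point_nonzero:
  fixes X :: "('a::field ^ 'n) set"
  assumes "X \<in> pg_points"
  shows "\<not> X \<subseteq> {0}"
proof
  assume "X \<subseteq> {0}"
  hence "vec.dim X \<le> vec.dim ({0}::('a ^ 'n) set)" by (rule vec.dim_subset)
  hence "vec.dim X \<le> 0" by (simp only: dim_zero_space)
  moreover have "vec.dim X = 1" using assms unfolding pg_points_def by simp
  ultimately show False by linarith
qed

lemma point_span:
  fixes X :: "('a::field ^ 'n) set"
  assumes "X \<in> pg_points"
  obtains x where "x \<noteq> 0" "X = vec.span {x}"
proof -
  obtain v where v: "v \<in> X" "v \<noteq> 0" using point_nonzero[OF assms] by blast
  have "X \<in> Wset {0} UNIV" using assms pg_points_Wset by blast
  hence "X = vec.span (insert v {0})"
    using Wset_unique[of "{0}" X UNIV v] v by (simp add: vec.subspace_0)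
  moreover have "insert v {0} = insert 0 {v}" by auto
  ultimately have "X = vec.span {v}" by (simp only: vec.span_insert_0)
  thus ?thesis using that v by blast
qed

lemma span_point:
  fixes x :: "'a::field ^ 'n"
  assumes "x \<noteq> 0"
  shows "vec.span {x} \<in> pg_points"
  unfolding pg_points_def using assms by (simp add: vec.dim_singleton)

lemma point_sub_iff:
  fixes x :: "'a::field ^ 'n"
  assumes "vec.subspace V"
  shows "vec.span {x} \<subseteq> V \<longleftrightarrow> x \<in> V"
  using assms vec.span_minimal vec.span_base by blast

lemma card_pts:
  fixes V :: "('a::{finite,field} ^ 'n) set"
  assumes "vec.subspace V"
  shows "real (card {X \<in> pg_points. X \<subseteq> V}) = (real CARD('a) ^ vec.dim V - 1) / (real CARD('a) - 1)"
proof -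
  have q2: "real CARD('a) > 1" 
  proof -
    have "(0::'a) \<noteq> 1" by simp
    hence "card {0::'a, 1} \<le> CARD('a)" by (intro card_mono) auto
    thus ?thesis by simp
  qed
  have "card (Wset {0} V) * (CARD('a) ^ (0 + 1) - CARD('a) ^ 0) = CARD('a) ^ vec.dim V - CARD('a) ^ 0"
    using Wset_count[of "{0}" V] assms by (simp add: vec.subspace_0 dim_zero_space)
  hence e: "card (Wset {0} V) * (CARD('a) - 1) = CARD('a) ^ vec.dim V - 1" by simp
  have q1: "CARD('a) \<ge> 1" "CARD('a) ^ vec.dim V \<ge> 1" using q2 by auto
  have "real (card (Wset {0} V)) * (real CARD('a) - 1) = real (card (Wset {0} V) * (CARD('a) - 1))"
    using q1 by (simp add: of_nat_diff)
  also have "\<dots> = real (CARD('a) ^ vec.dim V - 1)" using e by simp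
  also have "\<dots> = real CARD('a) ^ vec.dim V - 1" using q1 by (simp add: of_nat_diff)
  finally have "real (card (Wset {0} V)) * (real CARD('a) - 1) = real CARD('a) ^ vec.dim V - 1" .
  thus ?thesis using q2 Wset_zero[of V] by (simp add: field_simps)
qed

lemma card_field_gt1: "CARD('a::{finite,field}) > 1"
proof -
  have "(0::'a) \<noteq> 1" by simp
  hence "card {0::'a, 1} \<le> CARD('a)" by (intro card_mono) auto
  thus ?thesis by simp
qed

lemma dim_UNIV_vec: "vec.dim (UNIV :: ('a::field ^ 'n) set) = CARD('n)"
  by (simp add: vec.dim_UNIV card_cart_basis)

definition UU :: "('a::field ^ 'n) set list \<Rightarrow> nat \<Rightarrow> ('a ^ 'n) set" where
  "UU c k = (if k = 0 then {0} else if k \<le> length c then c ! (k - 1) else UNIV)"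

lemma flag_len: "c \<in> max_flags \<Longrightarrow> length (c :: ('a::field ^ 'n) set list) = CARD('n) - 1"
  unfolding max_flags_def by simp

lemma UU_subspace:
  fixes c :: "('a::field ^ 'n) set list"
  assumes "c \<in> max_flags"
  shows "vec.subspace (UU c k)"
  using assms unfolding UU_def max_flags_def by (auto simp: vec.subspace_0 vec.subspace_UNIV)

lemma UU_dim:
  fixes c :: "('a::field ^ 'n) set list"
  assumes "c \<in> max_flags" "k \<le> CARD('n)"
  shows "vec.dim (UU c k) = k"
proof -
  have L: "length c = CARD('n) - 1" using flag_len[OF assms(1)] .
  show ?thesis
  proof (cases "k = 0")
    case True thus ?thesis by (simp add: UU_def dim_zero_space)
  next
    case False
    show ?thesis
    proof (cases "k \<le> length c")
      case True
      hence "k - 1 < length c" using False by simp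
      thus ?thesis using assms(1) False True unfolding UU_def max_flags_def by auto
    next
      case F2: False
      hence "k = CARD('n)" using L assms(2) by simp
      thus ?thesis using False F2 by (simp add: UU_def card_cart_basis)
    qed
  qed
qed

lemma UU_step:
  fixes c :: "('a::field ^ 'n) set list"
  assumes "c \<in> max_flags"
  shows "UU c k \<subseteq> UU c (Suc k)"
proof -
  have sub: "vec.subspace (UU c (Suc k))" by (rule UU_subspace[OF assms])
  show ?thesis
  proof (cases "k = 0")
    case True thus ?thesis using sub by (simp add: UU_def vec.subspace_0 vec.subspace_def)
  next
    case False
    show ?thesis
    proof (cases "Suc k \<le> length c")
      case True
      hence "k - 1 + 1 < length c" using False by simp
      hence "c ! (k - 1) \<subset> c ! (k - 1 + 1)" using assms unfolding max_flags_def by blast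
      thus ?thesis using False True unfolding UU_def by auto
    next
      case False
      thus ?thesis unfolding UU_def by auto
    qed
  qed
qed

lemma UU_mono:
  fixes c :: "('a::field ^ 'n) set list"
  assumes "c \<in> max_flags" "k \<le> k'"
  shows "UU c k \<subseteq> UU c k'"
  using assms(2)
proof (induction k' rule: dec_induct)
  case base thus ?case by simp
next
  case (step n) thus ?case using UU_step[OF assms(1), of n] by blast
qed

lemma type_le:
  fixes c :: "('a::field ^ 'n) set list"
  assumes "c \<in> max_flags" "X \<in> pg_points"
  shows "X \<subseteq> UU c k \<longleftrightarrow> flag_type c X \<le> k"
proof -
  have nz: "\<not> X \<subseteq> {0}" by (rule point_nonzero[OF assms(2)])
  let ?P = "\<lambda>k. k \<in> {1..length c} \<and> X \<subseteq> c ! (k - 1)"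
  show ?thesis
  proof (cases "\<exists>k\<in>{1..length c}. X \<subseteq> c ! (k - 1)")
    case True
    hence ex: "\<exists>k. ?P k" by blast
    have t: "flag_type c X = (LEAST k. ?P k)" using True unfolding flag_type_def by simp
    have Pt: "?P (flag_type c X)" unfolding t by (rule LeastI_ex[OF ex])
    have tle: "\<And>k. ?P k \<Longrightarrow> flag_type c X \<le> k" unfolding t by (rule Least_le)
    show ?thesis
    proof (cases "k = 0")
      case True thus ?thesis using nz Pt by (simp add: UU_def)
    next
      case False
      show ?thesis
      proof (cases "k \<le> length c")
        case True
        show ?thesis
        proof
          assume "X \<subseteq> UU c k" thus "flag_type c X \<le> k"
            using True False tle[of k] by (simp add: UU_def)
        next
          assume "flag_type c X \<le> k"
          hence "UU c (flag_type c X) \<subseteq> UU c k" by (rule UU_mono[OF assms(1)])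
          moreover have "X \<subseteq> UU c (flag_type c X)" using Pt by (simp add: UU_def)
          ultimately show "X \<subseteq> UU c k" by blast
        qed
      next
        case F2: False
        thus ?thesis using Pt False by (simp add: UU_def)
      qed
    qed
  next
    case False
    have t: "flag_type c X = length c + 1" using False unfolding flag_type_def by simp
    show ?thesis
    proof (cases "k = 0")
      case True thus ?thesis using nz t by (simp add: UU_def)
    next
      case F0: False
      show ?thesis
      proof (cases "k \<le> length c")
        case True
        hence "\<not> X \<subseteq> c ! (k - 1)" using False F0 by auto
        thus ?thesis using t True F0 by (simp add: UU_def)
      next
        case F2: False
        thus ?thesis using t F0 by (simp add: UU_def)
      qed
    qed
  qed
qed

lemma type_eq:
  fixes c :: "('a::field ^ 'n) set list"
  assumes "c \<in> max_flags" "X \<in> pg_points" "1 \<le> h"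
  shows "flag_type c X = h \<longleftrightarrow> X \<subseteq> UU c h \<and> \<not> X \<subseteq> UU c (h - 1)"
  using type_le[OF assms(1,2), of h] type_le[OF assms(1,2), of "h - 1"] assms(3) by auto



lemma finite_flags: "finite (max_flags :: ('a::{finite,field} ^ 'n) set list set)"
proof -
  have "max_flags \<subseteq> {xs :: ('a ^ 'n) set list. set xs \<subseteq> UNIV \<and> length xs = CARD('n) - 1}"
    unfolding max_flags_def by auto
  thus ?thesis using finite_lists_length_eq[of "UNIV :: ('a ^ 'n) set set"] finite_subset by auto
qed

lemma finite_points: "finite (pg_points :: ('a::{finite,field} ^ 'n) set set)"
  by simp

lemma UU_nth:
  fixes c :: "('a::field ^ 'n) set list"
  shows "k < length c \<Longrightarrow> UU c (Suc k) = c ! k"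
  by (simp add: UU_def)

lemma flag_eqI:
  fixes c c' :: "('a::field ^ 'n) set list"
  assumes "c \<in> max_flags" "c' \<in> max_flags" "\<And>k. UU c k = UU c' k"
  shows "c = c'"
proof (rule nth_equalityI)
  show "length c = length c'" using flag_len assms by metis
  fix k assume "k < length c"
  moreover hence "k < length c'" using flag_len assms by metis
  ultimately show "c ! k = c' ! k" using assms(3)[of "Suc k"] UU_nth by metis
qed

lemma flag_intro:
  fixes c :: "('a::field ^ 'n) set list"
  assumes "length c = CARD('n) - 1"
    "\<And>k. k < length c \<Longrightarrow> vec.subspace (c ! k) \<and> vec.dim (c ! k) = k + 1"
    "\<And>k. k + 1 < length c \<Longrightarrow> c ! k \<subseteq> c ! (k + 1)"
  shows "c \<in> max_flags"
  unfolding max_flags_def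
proof (intro CollectI conjI allI impI)
  fix k assume k: "k + 1 < length c"
  have "vec.dim (c ! k) \<noteq> vec.dim (c ! (k + 1))" using assms(2)[of k] assms(2)[of "k+1"] k by simp
  hence ne: "c ! k \<noteq> c ! (k + 1)" by metis
  show "c ! k \<subset> c ! (k + 1)" by (rule psubsetI[OF assms(3)[OF k] ne])
qed (use assms in auto)

definition panel :: "nat \<Rightarrow> ('a::field ^ 'n) set list \<Rightarrow> ('a ^ 'n) set list set" where
  "panel i c = {c' \<in> max_flags. \<forall>k. k \<noteq> i \<longrightarrow> UU c' k = UU c k}"

lemma upd_flag:
  fixes c :: "('a::field ^ 'n) set list"
  assumes c: "c \<in> max_flags" and i: "1 \<le> i" "i \<le> CARD('n) - 1"
    and W: "W \<in> Wset (UU c (i - 1)) (UU c (i + 1))"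
  shows "c[i - 1 := W] \<in> max_flags" "\<And>k. UU (c[i - 1 := W]) k = (if k = i then W else UU c k)"
proof -
  have L: "length c = CARD('n) - 1" using flag_len[OF c] .
  have il: "i - 1 < length c" using i L by simp
  have eq: "c[i - 1 := W] ! (i - 1) = W" using il by (rule nth_list_update_eq)
  have neq: "\<And>k. k \<noteq> i - 1 \<Longrightarrow> c[i - 1 := W] ! k = c ! k"
    by (rule nth_list_update_neq) simp
  have dA: "vec.dim (UU c (i - 1)) = i - 1" using UU_dim[OF c] i by simp
  have Wp: "vec.subspace W" "vec.dim W = i" "UU c (i - 1) \<subseteq> W" "W \<subseteq> UU c (i + 1)"
    using W dA i unfolding Wset_def by auto
  have cp: "\<And>k. k < length c \<Longrightarrow> vec.subspace (c ! k) \<and> vec.dim (c ! k) = k + 1"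
    using c unfolding max_flags_def by auto
  have cc: "\<And>k. k + 1 < length c \<Longrightarrow> c ! k \<subseteq> c ! (k + 1)"
    using c unfolding max_flags_def by auto
  show "c[i - 1 := W] \<in> max_flags"
  proof (rule flag_intro)
    show "length (c[i - 1 := W]) = CARD('n) - 1" using L by simp
    fix k
    show "k < length (c[i - 1 := W]) \<Longrightarrow> vec.subspace (c[i - 1 := W] ! k) \<and> vec.dim (c[i - 1 := W] ! k) = k + 1"
    proof (cases "k = i - 1")
      case True thus ?thesis using eq Wp i by simp
    next
      case False
      assume "k < length (c[i - 1 := W])"
      hence "k < length c" by simp
      thus ?thesis using cp[of k] neq[OF False] by simp
    qed
    assume k: "k + 1 < length (c[i - 1 := W])"
    hence k': "k + 1 < length c" by simp
    show "c[i - 1 := W] ! k \<subseteq> c[i - 1 := W] ! (k + 1)"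
    proof (cases "k = i - 1")
      case True
      hence "k + 1 \<noteq> i - 1" by simp
      hence e2: "c[i - 1 := W] ! (k + 1) = c ! (k + 1)" by (rule neq)
      have "i + 1 \<le> length c" using k' True i by simp
      hence "UU c (i + 1) = c ! i" by (simp add: UU_def)
      moreover have "c ! i = c ! (k + 1)" using True i by simp
      ultimately show ?thesis using True eq e2 Wp(4) by simp
    next
      case False
      show ?thesis
      proof (cases "k + 1 = i - 1")
        case True
        have "i - 1 \<noteq> 0" "i - 1 - 1 = k" "i - 1 \<le> length c" using k' i L True by auto
        hence "UU c (i - 1) = c ! k" unfolding UU_def by simp
        thus ?thesis using True eq neq[OF False] Wp(3) by simp
      next
        case F2: False
        thus ?thesis using neq[OF False] neq[OF F2] cc[OF k'] by simp
      qed
    qed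
  qed
  fix k
  show "UU (c[i - 1 := W]) k = (if k = i then W else UU c k)"
  proof (cases "k = 0")
    case True thus ?thesis using i by (simp add: UU_def)
  next
    case False
    show ?thesis
    proof (cases "k \<le> length c")
      case True
      show ?thesis
      proof (cases "k = i")
        case True
        moreover have "i \<noteq> 0" "i \<le> length c" using i L by auto
        ultimately show ?thesis using eq by (simp add: UU_def)
      next
        case F3: False
        hence "k - 1 \<noteq> i - 1" using False i by simp
        hence "c[i - 1 := W] ! (k - 1) = c ! (k - 1)" by (rule neq)
        thus ?thesis using True False F3 by (simp add: UU_def)
      qed
    next
      case F2: False
      hence "k \<noteq> i" using i L by auto
      thus ?thesis using False F2 by (simp add: UU_def)
    qed
  qed
qed

lemma panel_bij:
  fixes c :: "('a::field ^ 'n) set list"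
  assumes c: "c \<in> max_flags" and i: "1 \<le> i" "i \<le> CARD('n) - 1"
  shows "bij_betw (\<lambda>c'. UU c' i) (panel i c) (Wset (UU c (i - 1)) (UU c (i + 1)))"
proof (rule bij_betw_imageI)
  show "inj_on (\<lambda>c'. UU c' i) (panel i c)"
  proof (rule inj_onI)
    fix c1 c2 assume "c1 \<in> panel i c" "c2 \<in> panel i c" "UU c1 i = UU c2 i"
    moreover have "UU c1 k = UU c2 k" for k
      using calculation unfolding panel_def by (cases "k = i") auto
    ultimately show "c1 = c2" unfolding panel_def by (intro flag_eqI) auto
  qed
  show "(\<lambda>c'. UU c' i) ` panel i c = Wset (UU c (i - 1)) (UU c (i + 1))"
  proof
    show "(\<lambda>c'. UU c' i) ` panel i c \<subseteq> Wset (UU c (i - 1)) (UU c (i + 1))"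
    proof
      fix W assume "W \<in> (\<lambda>c'. UU c' i) ` panel i c"
      then obtain c' where c': "c' \<in> panel i c" "W = UU c' i" by blast
      have cf: "c' \<in> max_flags" and eqk: "\<And>k. k \<noteq> i \<Longrightarrow> UU c' k = UU c k"
        using c' unfolding panel_def by auto
      have "vec.dim W = i" using UU_dim[OF cf, of i] i c' by simp
      moreover have "vec.dim (UU c (i - 1)) = i - 1" using UU_dim[OF c] i by simp
      moreover have "UU c (i - 1) \<subseteq> W" using UU_mono[OF cf, of "i - 1" i] eqk[of "i - 1"] c' i by simp
      moreover have "W \<subseteq> UU c (i + 1)" using UU_mono[OF cf, of i "i + 1"] eqk[of "i + 1"] c' by simp
      ultimately show "W \<in> Wset (UU c (i - 1)) (UU c (i + 1))"
        unfolding Wset_def using UU_subspace[OF cf] c' i by auto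
    qed
    show "Wset (UU c (i - 1)) (UU c (i + 1)) \<subseteq> (\<lambda>c'. UU c' i) ` panel i c"
    proof
      fix W assume W: "W \<in> Wset (UU c (i - 1)) (UU c (i + 1))"
      have "c[i - 1 := W] \<in> panel i c" "UU (c[i - 1 := W]) i = W"
        using upd_flag[OF c i W] unfolding panel_def by auto
      thus "W \<in> (\<lambda>c'. UU c' i) ` panel i c" by (metis image_eqI)
    qed
  qed
qed

lemma card_Wset_panel:
  fixes c :: "('a::{finite,field} ^ 'n) set list"
  assumes c: "c \<in> max_flags" and i: "1 \<le> i" "i \<le> CARD('n) - 1"
  shows "card (Wset (UU c (i - 1)) (UU c (i + 1))) = CARD('a) + 1"
proof -
  let ?q = "CARD('a)" and ?r = "CARD('a) ^ (i - 1)"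
  have q: "?q > 1" by (rule card_field_gt1)
  have r: "?r \<ge> 1" using q by simp
  have d1: "vec.dim (UU c (i - 1)) = i - 1" "vec.dim (UU c (i + 1)) = i + 1"
    using UU_dim[OF c] i by auto
  have sub: "UU c (i - 1) \<subseteq> UU c (i + 1)" by (rule UU_mono[OF c]) simp
  have "card (Wset (UU c (i - 1)) (UU c (i + 1))) * (?q ^ (i - 1 + 1) - ?q ^ (i - 1)) = ?q ^ (i + 1) - ?q ^ (i - 1)"
    using Wset_count[OF UU_subspace[OF c] UU_subspace[OF c] sub] unfolding d1 .
  moreover obtain p where p: "i = Suc p" using i by (cases i) auto
  ultimately have e: "card (Wset (UU c (i - 1)) (UU c (i + 1))) * ((?q - 1) * ?r) = (?q + 1) * ((?q - 1) * ?r)"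
    by (simp add: algebra_simps diff_mult_distrib diff_mult_distrib2 p)
  have X: "(?q - 1) * ?r \<noteq> 0" using q r by simp
  show ?thesis using e mult_right_cancel[OF X] by blast
qed

lemma card_panel:
  fixes c :: "('a::{finite,field} ^ 'n) set list"
  assumes c: "c \<in> max_flags" and i: "1 \<le> i" "i \<le> CARD('n) - 1"
  shows "card (panel i c) = CARD('a) + 1"
  using bij_betw_same_card[OF panel_bij[OF c i]] card_Wset_panel[OF c i] by simp



abbreviation ind :: "bool \<Rightarrow> real" where "ind b \<equiv> (if b then 1 else 0)"

lemma panel_D_sum:
  fixes c :: "('a::{finite,field} ^ 'n) set list"
  assumes c: "c \<in> max_flags" and Y: "Y \<in> pg_points" and i: "1 \<le> i" "i \<le> CARD('n) - 1"
  shows "(\<Sum>c'\<in>panel i c. real CARD('a) * ind (flag_type c' Y = i) - ind (flag_type c' Y = i + 1)) = 0"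
proof -
  define A where "A = UU c (i - 1)"
  define B where "B = UU c (i + 1)"
  define q where "q = real CARD('a)"
  define f where "f W = q * ind (Y \<subseteq> W \<and> \<not> Y \<subseteq> A) - ind (Y \<subseteq> B \<and> \<not> Y \<subseteq> W)" for W
  have fin: "finite (Wset A B)" by simp
  have step: "real CARD('a) * ind (flag_type c' Y = i) - ind (flag_type c' Y = i + 1) = f (UU c' i)"
    if c': "c' \<in> panel i c" for c'
  proof -
    have cf: "c' \<in> max_flags" using c' unfolding panel_def by auto
    have eA: "UU c' (i - 1) = A" and eB: "UU c' (i + 1) = B"
      using c' i unfolding panel_def A_def B_def by auto
    have t1: "flag_type c' Y = i \<longleftrightarrow> Y \<subseteq> UU c' i \<and> \<not> Y \<subseteq> A"
      using type_eq[OF cf Y, of i] i eA by simp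
    have t2: "flag_type c' Y = i + 1 \<longleftrightarrow> Y \<subseteq> B \<and> \<not> Y \<subseteq> UU c' i"
      using type_eq[OF cf Y, of "i + 1"] eB by simp
    show ?thesis unfolding f_def q_def using t1 t2 by simp
  qed
  have "(\<Sum>c'\<in>panel i c. real CARD('a) * ind (flag_type c' Y = i) - ind (flag_type c' Y = i + 1))
        = (\<Sum>c'\<in>panel i c. f (UU c' i))"
    by (rule sum.cong[OF refl], rule step)
  also have "\<dots> = (\<Sum>W\<in>Wset A B. f W)"
    unfolding A_def B_def by (rule sum.reindex_bij_betw[OF panel_bij[OF c i]])
  also have "\<dots> = 0"
  proof (cases "Y \<subseteq> A \<or> \<not> Y \<subseteq> B")
    case True
    have "f W = 0" if "W \<in> Wset A B" for W
      using that True unfolding Wset_def f_def by auto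
    thus ?thesis by simp
  next
    case False
    hence YA: "\<not> Y \<subseteq> A" and YB: "Y \<subseteq> B" by auto
    obtain y where y: "y \<noteq> 0" "Y = vec.span {y}" using point_span[OF Y] by blast
    have sA: "vec.subspace A" "vec.subspace B" "A \<subseteq> B"
      unfolding A_def B_def using UU_subspace[OF c] UU_mono[OF c] by auto
    have yB: "y \<in> B" using YB y point_sub_iff[OF sA(2)] by simp
    have yA: "y \<notin> A" using YA y point_sub_iff[OF sA(1)] by simp
    define W0 where "W0 = vec.span (insert y A)"
    have W0: "W0 \<in> Wset A B" "y \<in> W0" using Wset_mem[OF sA yB yA] unfolding W0_def by auto
    have S1: "Wset A B \<inter> {W. Y \<subseteq> W} = {W0}"
    proof
      show "Wset A B \<inter> {W. Y \<subseteq> W} \<subseteq> {W0}"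
      proof
        fix W assume W: "W \<in> Wset A B \<inter> {W. Y \<subseteq> W}"
        hence "vec.subspace W" unfolding Wset_def by auto
        hence "y \<in> W" using W y point_sub_iff by auto
        thus "W \<in> {W0}" using Wset_unique[OF sA(1), of W B y] W yA unfolding W0_def by auto
      qed
      have "vec.subspace W0" using W0 unfolding Wset_def by auto
      hence "Y \<subseteq> W0" using W0 y point_sub_iff by auto
      thus "{W0} \<subseteq> Wset A B \<inter> {W. Y \<subseteq> W}" using W0 by auto
    qed
    have cW: "card (Wset A B) = CARD('a) + 1"
      using card_Wset_panel[OF c i] unfolding A_def B_def .
    have "(\<Sum>W\<in>Wset A B. f W) = (\<Sum>W\<in>Wset A B. if Y \<subseteq> W then q else - 1)"
      by (rule sum.cong) (auto simp: f_def YA YB)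
    also have "\<dots> = (\<Sum>W\<in>Wset A B \<inter> {W. Y \<subseteq> W}. q) + (\<Sum>W\<in>Wset A B \<inter> - {W. Y \<subseteq> W}. - 1)"
      by (rule sum.If_cases[OF fin])
    also have "\<dots> = q - real (card (Wset A B \<inter> - {W. Y \<subseteq> W}))"
      unfolding S1 by simp
    also have "card (Wset A B \<inter> - {W. Y \<subseteq> W}) = card (Wset A B) - card (Wset A B \<inter> {W. Y \<subseteq> W})"
    proof -
      have "Wset A B \<inter> - {W. Y \<subseteq> W} = Wset A B - (Wset A B \<inter> {W. Y \<subseteq> W})" by blast
      thus ?thesis using card_Diff_subset[OF _ Int_lower1] fin by (metis finite_Int)
    qed
    also have "\<dots> = CARD('a)" unfolding S1 cW by simp
    finally show ?thesis unfolding q_def by simp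
  qed
  finally show ?thesis .
qed

definition Rp :: "nat \<Rightarrow> ('a::field ^ 'n) set list \<Rightarrow> ('a ^ 'n) set list \<Rightarrow> bool" where
  "Rp i c c' \<longleftrightarrow> (\<forall>k. k \<noteq> i \<longrightarrow> UU c' k = UU c k)"

lemma panel_Rp: "panel i c = {c' \<in> max_flags. Rp i c c'}"
  unfolding panel_def Rp_def by simp

lemma Rp_sym: "Rp i c c' = Rp i c' c"
  unfolding Rp_def by metis

lemma double_count:
  fixes \<phi> :: "('a::{finite,field} ^ 'n) set list \<Rightarrow> real"
  assumes i: "1 \<le> i" "i \<le> CARD('n) - 1"
  shows "(\<Sum>c\<in>max_flags. \<Sum>c'\<in>panel i c. \<phi> c') = (real CARD('a) + 1) * (\<Sum>c\<in>max_flags. \<phi> c)"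
proof -
  have "(\<Sum>c\<in>max_flags. \<Sum>c'\<in>panel i c. \<phi> c') = (\<Sum>c\<in>max_flags. \<Sum>c'\<in>{c' \<in> max_flags. Rp i c c'}. \<phi> c')"
    unfolding panel_Rp ..
  also have "\<dots> = (\<Sum>c'\<in>max_flags. \<Sum>c | c \<in> max_flags \<and> Rp i c c'. \<phi> c')"
    by (rule sum.swap_restrict) (simp_all add: finite_flags)
  also have "\<dots> = (\<Sum>c'\<in>max_flags. real (card (panel i c')) * \<phi> c')"
  proof (rule sum.cong[OF refl])
    fix c' assume "c' \<in> (max_flags :: ('a ^ 'n) set list set)"
    have "{c. c \<in> max_flags \<and> Rp i c c'} = panel i c'" unfolding panel_Rp using Rp_sym by blast
    thus "(\<Sum>c | c \<in> max_flags \<and> Rp i c c'. \<phi> c') = real (card (panel i c')) * \<phi> c'" by simp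
  qed
  also have "\<dots> = (\<Sum>c'\<in>max_flags. (real CARD('a) + 1) * \<phi> c')"
    by (rule sum.cong[OF refl]) (simp add: card_panel[OF _ i])
  finally show ?thesis by (simp add: sum_distrib_left)
qed

lemma panel_zero:
  fixes X Y :: "('a::{finite,field} ^ 'n) set"
  assumes X: "X \<in> pg_points" and Y: "Y \<in> pg_points"
    and h: "1 \<le> h" "h \<noteq> i" "h \<noteq> i + 1" and i: "1 \<le> i" "i \<le> CARD('n) - 1"
  shows "(\<Sum>c\<in>max_flags. ind (flag_type c X = h) *
            (real CARD('a) * ind (flag_type c Y = i) - ind (flag_type c Y = i + 1))) = 0"
proof -
  define \<phi> where "\<phi> c = ind (flag_type c X = h) *
            (real CARD('a) * ind (flag_type c Y = i) - ind (flag_type c Y = i + 1))"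
    for c :: "('a ^ 'n) set list"
  have inner: "(\<Sum>c'\<in>panel i c. \<phi> c') = 0" if c: "c \<in> max_flags" for c
  proof -
    have "\<phi> c' = ind (flag_type c X = h) *
            (real CARD('a) * ind (flag_type c' Y = i) - ind (flag_type c' Y = i + 1))"
      if c': "c' \<in> panel i c" for c'
    proof -
      have cf: "c' \<in> max_flags" and e: "\<And>k. k \<noteq> i \<Longrightarrow> UU c' k = UU c k"
        using c' unfolding panel_def by auto
      have "h - 1 \<noteq> i" using h by auto
      hence "flag_type c' X = h \<longleftrightarrow> flag_type c X = h"
        using type_eq[OF cf X h(1)] type_eq[OF c X h(1)] e[OF h(2)] e[of "h - 1"] by simp
      thus ?thesis unfolding \<phi>_def by simp
    qed
    hence "(\<Sum>c'\<in>panel i c. \<phi> c') = (\<Sum>c'\<in>panel i c. ind (flag_type c X = h) *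
            (real CARD('a) * ind (flag_type c' Y = i) - ind (flag_type c' Y = i + 1)))"
      by (rule sum.cong[OF refl])
    also have "\<dots> = ind (flag_type c X = h) * (\<Sum>c'\<in>panel i c.
            (real CARD('a) * ind (flag_type c' Y = i) - ind (flag_type c' Y = i + 1)))"
      by (rule sum_distrib_left[symmetric])
    also have "\<dots> = 0" using panel_D_sum[OF c Y i] by simp
    finally show ?thesis .
  qed
  have "(real CARD('a) + 1) * (\<Sum>c\<in>max_flags. \<phi> c) = 0"
    using double_count[OF i, of \<phi>] inner by simp
  moreover have "real CARD('a) + 1 \<noteq> 0" by simp
  ultimately show ?thesis unfolding \<phi>_def by simp
qed



lemma indep2:
  fixes x y :: "'a::field ^ 'n"
  assumes "x \<noteq> 0" "y \<noteq> 0" "vec.span {x} \<noteq> vec.span {y}"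
  shows "vec.independent {x, y}"
proof -
  have "x \<notin> vec.span {y}"
  proof
    assume xy: "x \<in> vec.span {y}"
    hence sub: "vec.span {x} \<subseteq> vec.span {y}" using vec.span_minimal vec.subspace_span by blast
    have "vec.dim (vec.span {y}) \<le> vec.dim (vec.span {x})" using assms by (simp add: vec.dim_singleton)
    hence "vec.span {x} = vec.span {y}" using vec.subspace_dim_equal[OF _ _ sub] by simp
    thus False using assms(3) by simp
  qed
  moreover have "x \<noteq> y" using assms(3) by auto
  ultimately show ?thesis using assms(2) by (simp add: vec.independent_insert vec.dependent_single)
qed

lemma aut2:
  fixes X Y X' Y' :: "('a::{finite,field} ^ 'n) set"
  assumes pts: "X \<in> pg_points" "Y \<in> pg_points" "X' \<in> pg_points" "Y' \<in> pg_points"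
    and ne: "X \<noteq> Y" "X' \<noteq> Y'"
  shows "\<exists>g. Vector_Spaces.linear (*s) (*s) g \<and> inj g \<and> g ` X = X' \<and> g ` Y = Y'"
proof -
  obtain x where x: "x \<noteq> 0" "X = vec.span {x}" using point_span[OF pts(1)] by blast
  obtain y where y: "y \<noteq> 0" "Y = vec.span {y}" using point_span[OF pts(2)] by blast
  obtain x' where x': "x' \<noteq> 0" "X' = vec.span {x'}" using point_span[OF pts(3)] by blast
  obtain y' where y': "y' \<noteq> 0" "Y' = vec.span {y'}" using point_span[OF pts(4)] by blast
  have xy: "x \<noteq> y" using x y ne by auto
  have xy': "x' \<noteq> y'" using x' y' ne by auto
  define f where "f z = (if z = x then x' else y')" for z
  have fimg: "f ` {x, y} = {x', y'}" using xy unfolding f_def by auto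
  have "vec.independent {x, y}" using indep2 x y ne by simp
  moreover have "vec.independent (f ` {x, y})" unfolding fimg using indep2 x' y' ne by simp
  moreover have "inj_on f {x, y}" using xy xy' unfolding f_def by (auto simp: inj_on_def)
  ultimately obtain g where g: "Vector_Spaces.linear (*s) (*s) g" "inj g" "\<forall>z\<in>{x, y}. g z = f z"
    using vec.linear_independent_extend_inj by blast
  have "g ` X = vec.span (g ` {x})" using vec.linear_span_image[OF g(1), of "{x}"] x by simp
  also have "\<dots> = X'" using g(3) x' unfolding f_def by simp
  finally have 1: "g ` X = X'" .
  have "g ` Y = vec.span (g ` {y})" using vec.linear_span_image[OF g(1), of "{y}"] y by simp
  also have "\<dots> = Y'" using g(3) y' xy unfolding f_def by simp
  finally have 2: "g ` Y = Y'" .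
  show ?thesis using g 1 2 by blast
qed

lemma exists_point_ne:
  fixes X :: "('a::{finite,field} ^ 'n) set"
  assumes "X \<in> pg_points" "CARD('n) \<ge> 2"
  shows "\<exists>Y\<in>pg_points. Y \<noteq> X"
proof (rule ccontr)
  assume "\<not> ?thesis"
  hence "pg_points \<subseteq> {X}" by auto
  hence "card (pg_points :: ('a ^ 'n) set set) \<le> card {X}" by (intro card_mono) simp_all
  hence "card (pg_points :: ('a ^ 'n) set set) \<le> 1" by simp
  moreover have "real (card (pg_points :: ('a ^ 'n) set set)) = (real CARD('a) ^ CARD('n) - 1) / (real CARD('a) - 1)"
    using card_pts[of "UNIV :: ('a ^ 'n) set"] by (simp add: card_cart_basis vec.subspace_UNIV)
  moreover have "(real CARD('a) ^ CARD('n) - 1) / (real CARD('a) - 1) > 1"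
  proof -
    have q: "real CARD('a) > 1" using card_field_gt1 by simp
    have "real CARD('a) ^ 2 \<le> real CARD('a) ^ CARD('n)"
      by (rule power_increasing[OF assms(2)]) (use q in simp)
    moreover have "real CARD('a) ^ 2 - (2 * real CARD('a) - 1) = (real CARD('a) - 1) ^ 2"
      by (simp add: power2_eq_square algebra_simps)
    moreover have "(real CARD('a) - 1) ^ 2 > 0" using q by simp
    ultimately have "real CARD('a) ^ CARD('n) - 1 > real CARD('a) - 1" using q by linarith
    thus ?thesis using q by simp
  qed
  ultimately show False by linarith
qed

lemma aut1:
  fixes X X' :: "('a::{finite,field} ^ 'n) set"
  assumes pts: "X \<in> pg_points" "X' \<in> pg_points" and n: "CARD('n) \<ge> 2"
  shows "\<exists>g. Vector_Spaces.linear (*s) (*s) g \<and> inj g \<and> g ` X = X'"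
proof -
  obtain Y where Y: "Y \<in> pg_points" "Y \<noteq> X" using exists_point_ne[OF pts(1) n] by blast
  obtain Y' where Y': "Y' \<in> pg_points" "Y' \<noteq> X'" using exists_point_ne[OF pts(2) n] by blast
  show ?thesis using aut2[OF pts(1) Y(1) pts(2) Y'(1)] Y Y' by metis
qed

lemma flag_image:
  fixes g :: "'a::field ^ 'n \<Rightarrow> 'a ^ 'n"
  assumes g: "Vector_Spaces.linear (*s) (*s) g" "inj g" and c: "c \<in> max_flags"
  shows "map ((`) g) c \<in> max_flags"
proof (rule flag_intro)
  have L: "length c = CARD('n) - 1" using flag_len[OF c] .
  thus "length (map ((`) g) c) = CARD('n) - 1" by simp
  have cp: "\<And>k. k < length c \<Longrightarrow> vec.subspace (c ! k) \<and> vec.dim (c ! k) = k + 1"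
    using c unfolding max_flags_def by auto
  have cc: "\<And>k. k + 1 < length c \<Longrightarrow> c ! k \<subset> c ! (k + 1)"
    using c unfolding max_flags_def by auto
  have ij: "\<And>S. inj_on g S" by (rule inj_on_subset[OF g(2)]) simp
  fix k
  show "k < length (map ((`) g) c) \<Longrightarrow> vec.subspace (map ((`) g) c ! k) \<and> vec.dim (map ((`) g) c ! k) = k + 1"
  proof -
    assume k: "k < length (map ((`) g) c)"
    hence k': "k < length c" by simp
    have "vec.subspace (g ` (c ! k))" using vec.linear_subspace_image[OF g(1)] cp[OF k'] by simp
    moreover have "vec.dim (g ` (c ! k)) = k + 1" using vec.dim_image_eq[OF g(1) ij] cp[OF k'] by simp
    ultimately show ?thesis using k' by simp
  qed
  show "k + 1 < length (map ((`) g) c) \<Longrightarrow> map ((`) g) c ! k \<subseteq> map ((`) g) c ! (k + 1)"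
  proof -
    assume k: "k + 1 < length (map ((`) g) c)"
    hence k': "k + 1 < length c" by simp
    have "c ! k \<subseteq> c ! (k + 1)" using cc[OF k'] by blast
    hence "g ` (c ! k) \<subseteq> g ` (c ! (k + 1))" by (rule image_mono)
    thus ?thesis using k' by simp
  qed
qed

lemma flag_type_image:
  fixes g :: "'a::field ^ 'n \<Rightarrow> 'a ^ 'n"
  assumes "inj g"
  shows "flag_type (map ((`) g) c) (g ` X) = flag_type c X"
proof -
  have eq: "(g ` X \<subseteq> map ((`) g) c ! (k - 1)) = (X \<subseteq> c ! (k - 1))" if k: "k \<in> {1..length c}" for k
  proof -
    have "k - 1 < length c" using k by auto
    hence "map ((`) g) c ! (k - 1) = g ` (c ! (k - 1))" by simp
    thus ?thesis using assms by (simp add: inj_image_subset_iff)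
  qed
  have e1: "(\<exists>k\<in>{1..length c}. g ` X \<subseteq> map ((`) g) c ! (k - 1)) = (\<exists>k\<in>{1..length c}. X \<subseteq> c ! (k - 1))"
    by (rule bex_cong[OF refl eq])
  have e2: "(\<lambda>k. k \<in> {1..length c} \<and> g ` X \<subseteq> map ((`) g) c ! (k - 1)) = (\<lambda>k. k \<in> {1..length c} \<and> X \<subseteq> c ! (k - 1))"
  proof (rule ext)
    fix k show "(k \<in> {1..length c} \<and> g ` X \<subseteq> map ((`) g) c ! (k - 1)) = (k \<in> {1..length c} \<and> X \<subseteq> c ! (k - 1))"
    proof (cases "k \<in> {1..length c}")
      case True thus ?thesis using eq[OF True] by simp
    next
      case False thus ?thesis by (simp only: False simp_thms)
    qed
  qed
  show ?thesis by (simp only: flag_type_def length_map e1 e2)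
qed

lemma flags_bij:
  fixes g :: "'a::{finite,field} ^ 'n \<Rightarrow> 'a ^ 'n"
  assumes g: "Vector_Spaces.linear (*s) (*s) g" "inj g"
  shows "bij_betw (map ((`) g)) max_flags max_flags"
proof -
  have inj: "inj_on (map ((`) g)) max_flags"
  proof (rule inj_on_subset[of _ UNIV], rule inj_mapI)
    show "inj ((`) g)" using g(2) by (simp add: inj_def inj_image_eq_iff)
  qed simp
  have sub: "map ((`) g) ` max_flags \<subseteq> max_flags" using flag_image[OF g] by auto
  have "map ((`) g) ` max_flags = max_flags"
    by (rule card_subset_eq[OF finite_flags sub]) (simp add: card_image[OF inj])
  thus ?thesis using inj by (simp add: bij_betw_def)
qed

lemma sum_flags_invariant:
  fixes g :: "'a::{finite,field} ^ 'n \<Rightarrow> 'a ^ 'n" and \<psi> :: "nat \<Rightarrow> nat \<Rightarrow> real"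
  assumes g: "Vector_Spaces.linear (*s) (*s) g" "inj g"
  shows "(\<Sum>c\<in>max_flags. \<psi> (flag_type c (g ` X)) (flag_type c (g ` Y)))
       = (\<Sum>c\<in>max_flags. \<psi> (flag_type c X) (flag_type c Y))"
proof -
  have "(\<Sum>c\<in>max_flags. \<psi> (flag_type c (g ` X)) (flag_type c (g ` Y)))
     = (\<Sum>c\<in>max_flags. \<psi> (flag_type (map ((`) g) c) (g ` X)) (flag_type (map ((`) g) c) (g ` Y)))"
    by (rule sum.reindex_bij_betw[OF flags_bij[OF g], symmetric])
  also have "\<dots> = (\<Sum>c\<in>max_flags. \<psi> (flag_type c X) (flag_type c Y))"
    by (simp add: flag_type_image[OF g(2)])
  finally show ?thesis .
qed



definition NN :: "nat \<Rightarrow> nat \<Rightarrow> ('a::{finite,field} ^ 'n) set \<Rightarrow> ('a ^ 'n) set \<Rightarrow> real" where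
  "NN h i X Y = transp_mult (Tmat h) (Tmat i) X Y"

lemma Fmat_expand:
  fixes X Y :: "('a::{finite,field} ^ 'n) set"
  shows "transp_mult (Tmat h) (Fmat m j) X Y =
     real CARD('a) ^ j * (\<Sum>i = m - j + 1..m. NN h i X Y) - (\<Sum>i = m + 1..m + j. NN h i X Y)"
proof -
  have "transp_mult (Tmat h) (Fmat m j) X Y =
    (\<Sum>c\<in>max_flags. real CARD('a) ^ j * (\<Sum>i = m - j + 1..m. Tmat h c X * Tmat i c Y)
        - (\<Sum>i = m + 1..m + j. Tmat h c X * Tmat i c Y))"
    unfolding transp_mult_def Fmat_def
    by (rule sum.cong[OF refl]) (simp add: right_diff_distrib sum_distrib_left mult.left_commute)
  also have "\<dots> = real CARD('a) ^ j * (\<Sum>c\<in>max_flags. \<Sum>i = m - j + 1..m. Tmat h c X * Tmat i c Y)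
        - (\<Sum>c\<in>max_flags. \<Sum>i = m + 1..m + j. Tmat h c X * Tmat i c Y)"
    by (simp add: sum_subtractf sum_distrib_left)
  also have "\<dots> = real CARD('a) ^ j * (\<Sum>i = m - j + 1..m. NN h i X Y) - (\<Sum>i = m + 1..m + j. NN h i X Y)"
    unfolding NN_def transp_mult_def by (simp add: sum.swap[of _ max_flags])
  finally show ?thesis .
qed

lemma NN_step:
  fixes X Y :: "('a::{finite,field} ^ 'n) set"
  assumes X: "X \<in> pg_points" and Y: "Y \<in> pg_points"
    and h: "1 \<le> h" "h \<noteq> i" "h \<noteq> i + 1" and i: "1 \<le> i" "i \<le> CARD('n) - 1"
  shows "NN h (i + 1) X Y = real CARD('a) * NN h i X Y"
proof -
  have "0 = (\<Sum>c\<in>max_flags. ind (flag_type c X = h) *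
            (real CARD('a) * ind (flag_type c Y = i) - ind (flag_type c Y = i + 1)))"
    using panel_zero[OF X Y h i] by simp
  also have "\<dots> = real CARD('a) * NN h i X Y - NN h (i + 1) X Y"
    unfolding NN_def transp_mult_def Tmat_def
    by (simp add: right_diff_distrib sum_subtractf sum_distrib_left mult.left_commute)
  finally show ?thesis by simp
qed

lemma NN_geom:
  fixes X Y :: "('a::{finite,field} ^ 'n) set"
  assumes X: "X \<in> pg_points" and Y: "Y \<in> pg_points" and h: "1 \<le> h"
  shows "h + 1 + k \<le> CARD('n) \<Longrightarrow> NN h (h + 1 + k) X Y = real CARD('a) ^ k * NN h (h + 1) X Y"
proof (induction k)
  case 0 thus ?case by simp
next
  case (Suc k)
  have "NN h (h + 1 + k + 1) X Y = real CARD('a) * NN h (h + 1 + k) X Y"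
    by (rule NN_step[OF X Y h]) (use Suc.prems in auto)
  thus ?case using Suc by simp
qed

lemma NN_shift:
  fixes X Y :: "('a::{finite,field} ^ 'n) set"
  assumes X: "X \<in> pg_points" and Y: "Y \<in> pg_points" and h: "1 \<le> h"
    and i: "h + 1 \<le> i" "i + j \<le> CARD('n)"
  shows "real CARD('a) ^ j * NN h i X Y = NN h (i + j) X Y"
proof -
  obtain k where k: "i = h + 1 + k" using i(1) by (metis le_add_diff_inverse)
  have "NN h (i + j) X Y = NN h (h + 1 + (k + j)) X Y" using k by (simp add: add.assoc)
  also have "\<dots> = real CARD('a) ^ (k + j) * NN h (h + 1) X Y"
    by (rule NN_geom[OF X Y h]) (use i k in simp)
  also have "\<dots> = real CARD('a) ^ j * (real CARD('a) ^ k * NN h (h + 1) X Y)"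
    by (simp add: power_add)
  also have "real CARD('a) ^ k * NN h (h + 1) X Y = NN h i X Y"
    using NN_geom[OF X Y h, of k] k i by simp
  finally show ?thesis by simp
qed

lemma main_zero:
  fixes X Y :: "('a::{finite,field} ^ 'n) set"
  assumes X: "X \<in> pg_points" and Y: "Y \<in> pg_points"
    and m: "CARD('n) = 2 * m" and j: "1 \<le> j" "j \<le> m" and h: "1 \<le> h" "h < m - j + 1"
  shows "transp_mult (Tmat h) (Fmat m j) X Y = 0"
proof -
  have "real CARD('a) ^ j * (\<Sum>i = m - j + 1..m. NN h i X Y) = (\<Sum>i = m - j + 1..m. NN h (i + j) X Y)"
    unfolding sum_distrib_left
    by (rule sum.cong[OF refl], rule NN_shift[OF X Y h(1)]) (use m j h in auto)
  also have "\<dots> = (\<Sum>i = m - j + 1 + j..m + j. NN h i X Y)"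
    by (rule sum.shift_bounds_cl_nat_ivl[symmetric])
  also have "m - j + 1 + j = m + 1" using j by simp
  finally show ?thesis unfolding Fmat_expand by simp
qed

lemma main_s:
  fixes X Y :: "('a::{finite,field} ^ 'n) set"
  assumes X: "X \<in> pg_points" and Y: "Y \<in> pg_points"
    and m: "CARD('n) = 2 * m" and j: "1 \<le> j" "j \<le> m"
  shows "transp_mult (Tmat (m - j + 1)) (Fmat m j) X Y =
     real CARD('a) ^ (j - 1) * (real CARD('a) * NN (m - j + 1) (m - j + 1) X Y - NN (m - j + 1) (m - j + 2) X Y)"
proof -
  define s where "s = m - j + 1"
  have s: "1 \<le> s" "s \<le> m" "s + j = m + 1" using j unfolding s_def by auto
  define q where "q = real CARD('a)"
  have A: "(\<Sum>i = s..m. NN s i X Y) = NN s s X Y + (\<Sum>i = Suc s..m. NN s i X Y)"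
    using s by (intro sum.atLeast_Suc_atMost) simp
  have B: "(\<Sum>i = m + 1..m + j. NN s i X Y) = NN s (m + 1) X Y + (\<Sum>i = Suc (m + 1)..m + j. NN s i X Y)"
    using j by (intro sum.atLeast_Suc_atMost) simp
  have C: "q ^ j * (\<Sum>i = Suc s..m. NN s i X Y) = (\<Sum>i = Suc (m + 1)..m + j. NN s i X Y)"
  proof -
    have "q ^ j * (\<Sum>i = Suc s..m. NN s i X Y) = (\<Sum>i = Suc s..m. NN s (i + j) X Y)"
      unfolding sum_distrib_left q_def
      by (rule sum.cong[OF refl], rule NN_shift[OF X Y s(1)]) (use m s in auto)
    also have "\<dots> = (\<Sum>i = Suc s + j..m + j. NN s i X Y)"
      by (rule sum.shift_bounds_cl_nat_ivl[symmetric])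
    also have "Suc s + j = Suc (m + 1)" using s by simp
    finally show ?thesis .
  qed
  have D: "NN s (m + 1) X Y = q ^ (j - 1) * NN s (s + 1) X Y"
  proof -
    have "q ^ (j - 1) * NN s (s + 1) X Y = NN s (s + 1 + (j - 1)) X Y"
      unfolding q_def by (rule NN_shift[OF X Y s(1)]) (use m s j in auto)
    also have "s + 1 + (j - 1) = m + 1" using s j by simp
    finally show ?thesis by simp
  qed
  have "transp_mult (Tmat s) (Fmat m j) X Y = q ^ j * NN s s X Y - q ^ (j - 1) * NN s (s + 1) X Y"
    unfolding Fmat_expand s_def[symmetric] q_def[symmetric] A B C[symmetric] D
    by (simp add: algebra_simps)
  also have "\<dots> = q ^ (j - 1) * (q * NN s s X Y - NN s (s + 1) X Y)"
    using j by (simp add: algebra_simps power_eq_if)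
  finally show ?thesis unfolding s_def q_def by (simp add: numeral_2_eq_2)
qed



definition Phi :: "nat \<Rightarrow> ('a::{finite,field} ^ 'n) set \<Rightarrow> ('a ^ 'n) set \<Rightarrow> real" where
  "Phi s X Y = (\<Sum>c\<in>max_flags. ind (flag_type c X = s) *
      (real CARD('a) * ind (flag_type c Y = s) - ind (flag_type c Y = s + 1)))"

lemma Phi_NN:
  fixes X Y :: "('a::{finite,field} ^ 'n) set"
  shows "real CARD('a) * NN s s X Y - NN s (s + 1) X Y = Phi s X Y"
  unfolding NN_def transp_mult_def Tmat_def Phi_def
  by (simp add: right_diff_distrib sum_subtractf sum_distrib_left mult.left_commute)

lemma Phi_inv:
  fixes X Y :: "('a::{finite,field} ^ 'n) set" and g :: "'a ^ 'n \<Rightarrow> 'a ^ 'n"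
  assumes g: "Vector_Spaces.linear (*s) (*s) g" "inj g"
  shows "Phi s (g ` X) (g ` Y) = Phi s X Y"
  unfolding Phi_def
  using sum_flags_invariant[OF g, of "\<lambda>a b. ind (a = s) * (real CARD('a) * ind (b = s) - ind (b = s + 1))" X Y]
  by simp

lemma Phi_diag:
  fixes X :: "('a::{finite,field} ^ 'n) set"
  shows "Phi s X X = real CARD('a) * real (card {c \<in> max_flags. flag_type c X = s})"
proof -
  have "Phi s X X = (\<Sum>c\<in>max_flags. real CARD('a) * ind (flag_type c X = s))"
    unfolding Phi_def by (rule sum.cong[OF refl]) simp
  also have "\<dots> = real CARD('a) * (\<Sum>c\<in>max_flags. ind (flag_type c X = s))"
    by (simp add: sum_distrib_left)
  also have "(\<Sum>c\<in>max_flags. ind (flag_type c X = s)) = (\<Sum>c\<in>{c \<in> max_flags. flag_type c X = s}. 1)"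
    by (rule sum.inter_filter[OF finite_flags, symmetric])
  finally show ?thesis by simp
qed

lemma count_type:
  fixes c :: "('a::{finite,field} ^ 'n) set list"
  assumes c: "c \<in> max_flags" and k: "1 \<le> k" "k \<le> CARD('n)"
  shows "(\<Sum>Y\<in>pg_points. ind (flag_type c Y = k)) = real CARD('a) ^ (k - 1)"
proof -
  have q: "real CARD('a) > 1" using card_field_gt1 by simp
  have "(\<Sum>Y\<in>pg_points. ind (flag_type c Y = k)) = (\<Sum>Y\<in>{Y \<in> pg_points. flag_type c Y = k}. (1::real))"
    by (rule sum.inter_filter[OF finite_points, symmetric])
  also have "{Y \<in> pg_points. flag_type c Y = k} = {Y \<in> pg_points. Y \<subseteq> UU c k} - {Y \<in> pg_points. Y \<subseteq> UU c (k - 1)}"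
    using type_eq[OF c _ k(1)] by blast
  also have "(\<Sum>Y\<in>{Y \<in> pg_points. Y \<subseteq> UU c k} - {Y \<in> pg_points. Y \<subseteq> UU c (k - 1)}. (1::real))
     = real (card {Y \<in> pg_points. Y \<subseteq> UU c k}) - real (card {Y \<in> pg_points. Y \<subseteq> UU c (k - 1)})"
  proof -
    have "{Y \<in> pg_points. Y \<subseteq> UU c (k - 1)} \<subseteq> {Y \<in> pg_points. Y \<subseteq> UU c k}"
      using UU_mono[OF c, of "k - 1" k] by auto
    thus ?thesis by (simp add: card_Diff_subset of_nat_diff card_mono)
  qed
  also have "\<dots> = (real CARD('a) ^ k - 1) / (real CARD('a) - 1) - (real CARD('a) ^ (k - 1) - 1) / (real CARD('a) - 1)"
    using card_pts[OF UU_subspace[OF c], of k] card_pts[OF UU_subspace[OF c], of "k - 1"]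
      UU_dim[OF c, of k] UU_dim[OF c, of "k - 1"] k by simp
  also have "\<dots> = real CARD('a) ^ (k - 1)"
  proof -
    obtain p where p: "k = Suc p" using k by (cases k) auto
    define r where "r = real CARD('a) ^ p"
    have "(real CARD('a) ^ k - 1) / (real CARD('a) - 1) - (real CARD('a) ^ (k - 1) - 1) / (real CARD('a) - 1)
        = (real CARD('a) * r - 1 - (r - 1)) / (real CARD('a) - 1)"
      unfolding p r_def by (simp add: diff_divide_distrib)
    also have "\<dots> = ((real CARD('a) - 1) * r) / (real CARD('a) - 1)" by (simp add: algebra_simps)
    also have "\<dots> = r" using q by simp
    finally show ?thesis unfolding r_def p by simp
  qed
  finally show ?thesis .
qed

lemma Phi_rowsum:
  fixes X :: "('a::{finite,field} ^ 'n) set"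
  assumes s: "1 \<le> s" "s \<le> CARD('n) - 1"
  shows "(\<Sum>Y\<in>pg_points. Phi s X Y) = 0"
proof -
  have "(\<Sum>Y\<in>pg_points. Phi s X Y) = (\<Sum>c\<in>max_flags. ind (flag_type c X = s) *
      (real CARD('a) * (\<Sum>Y\<in>pg_points. ind (flag_type c Y = s)) - (\<Sum>Y\<in>pg_points. ind (flag_type c Y = s + 1))))"
    unfolding Phi_def
    by (simp add: sum_distrib_left sum_subtractf right_diff_distrib) (simp only: sum.swap[of _ pg_points])
  also have "\<dots> = (\<Sum>c\<in>max_flags. ind (flag_type c X = s) * 0)"
  proof (rule sum.cong[OF refl])
    fix c assume c: "c \<in> (max_flags :: ('a ^ 'n) set list set)"
    have "real CARD('a) * (\<Sum>Y\<in>pg_points. ind (flag_type c Y = s)) - (\<Sum>Y\<in>pg_points. ind (flag_type c Y = s + 1))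
        = real CARD('a) * real CARD('a) ^ (s - 1) - real CARD('a) ^ s"
      using count_type[OF c, of s] count_type[OF c, of "s + 1"] s by simp
    also have "\<dots> = 0" using s by (cases s) auto
    finally show "ind (flag_type c X = s) *
      (real CARD('a) * (\<Sum>Y\<in>pg_points. ind (flag_type c Y = s)) - (\<Sum>Y\<in>pg_points. ind (flag_type c Y = s + 1)))
       = ind (flag_type c X = s) * 0" by simp
  qed
  finally show ?thesis by simp
qed

lemma exists_flag: "\<exists>c. c \<in> (max_flags :: ('a::field ^ 'n) set list set)"
proof -
  obtain bs :: "('a ^ 'n) list" where bs: "set bs = cart_basis" "distinct bs"
    using finite_distinct_list[OF finite_cart_basis] by blast
  have lb: "length bs = CARD('n)" using distinct_card[OF bs(2)] bs(1) card_cart_basis by metis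
  define c0 where "c0 = map (\<lambda>k. vec.span (set (take (Suc k) bs))) [0..<CARD('n) - 1]"
  have "c0 \<in> max_flags"
  proof (rule flag_intro)
    show "length c0 = CARD('n) - 1" unfolding c0_def by simp
    fix k
    show "k < length c0 \<Longrightarrow> vec.subspace (c0 ! k) \<and> vec.dim (c0 ! k) = k + 1"
    proof -
      assume k: "k < length c0"
      hence k': "k < CARD('n) - 1" unfolding c0_def by simp
      hence e: "c0 ! k = vec.span (set (take (Suc k) bs))" unfolding c0_def by simp
      have "vec.independent (set (take (Suc k) bs))"
        using vec.independent_mono[OF independent_cart_basis] set_take_subset bs(1) by metis
      hence "vec.dim (c0 ! k) = card (set (take (Suc k) bs))"
        unfolding e vec.dim_span by (rule vec.dim_eq_card_independent)
      also have "\<dots> = Suc k" using distinct_card[OF distinct_take[OF bs(2)]] lb k' by simp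
      finally show ?thesis using e by simp
    qed
    show "k + 1 < length c0 \<Longrightarrow> c0 ! k \<subseteq> c0 ! (k + 1)"
    proof -
      assume k: "k + 1 < length c0"
      hence k': "k + 1 < CARD('n) - 1" unfolding c0_def by simp
      have "set (take (Suc k) bs) \<subseteq> set (take (Suc (k + 1)) bs)" by (rule set_take_subset_set_take) simp
      hence "vec.span (set (take (Suc k) bs)) \<subseteq> vec.span (set (take (Suc (k + 1)) bs))" by (rule vec.span_mono)
      thus ?thesis using k' unfolding c0_def by simp
    qed
  qed
  thus ?thesis by blast
qed

lemma exists_type:
  fixes X :: "('a::{finite,field} ^ 'n) set"
  assumes X: "X \<in> pg_points" and s: "1 \<le> s" "s \<le> CARD('n)" and n: "CARD('n) \<ge> 2"
  shows "\<exists>c\<in>max_flags. flag_type c X = s"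
proof -
  obtain c0 where c0: "c0 \<in> (max_flags :: ('a ^ 'n) set list set)" using exists_flag by blast
  have sub: "UU c0 (s - 1) \<subseteq> UU c0 s" using UU_mono[OF c0] by simp
  have "vec.dim (UU c0 (s - 1)) \<noteq> vec.dim (UU c0 s)" using UU_dim[OF c0] s by simp
  hence "UU c0 (s - 1) \<noteq> UU c0 s" by metis
  then obtain v where v: "v \<in> UU c0 s" "v \<notin> UU c0 (s - 1)" using sub by blast
  have "0 \<in> UU c0 (s - 1)" using UU_subspace[OF c0] vec.subspace_0 by blast
  hence v0: "v \<noteq> 0" using v by metis
  define X1 where "X1 = vec.span {v}"
  have X1: "X1 \<in> pg_points" unfolding X1_def using span_point[OF v0] .
  have "X1 \<subseteq> UU c0 s" "\<not> X1 \<subseteq> UU c0 (s - 1)"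
    unfolding X1_def using point_sub_iff[OF UU_subspace[OF c0]] v by auto
  hence t: "flag_type c0 X1 = s" using type_eq[OF c0 X1 s(1)] by simp
  obtain g where g: "Vector_Spaces.linear (*s) (*s) g" "inj g" "g ` X1 = X"
    using aut1[OF X1 X n] by blast
  have "map ((`) g) c0 \<in> max_flags" by (rule flag_image[OF g(1,2) c0])
  moreover have "flag_type (map ((`) g) c0) X = s" using flag_type_image[OF g(2)] t g(3) by metis
  ultimately show ?thesis by blast
qed



theorem mainTheorem6:
  fixes m :: nat
    and TYPE_ANCHOR :: "'a::{finite,field} ^ 'n"
  assumes "m \<ge> 1" and "CARD('n) = 2 * m"
  shows "\<forall>j\<in>{1..m}.
     (\<exists>\<alpha>::real. \<alpha> \<noteq> 0 \<and>
        (\<forall>X\<in>(pg_points :: ('a ^ 'n) set set). \<forall>Y\<in>pg_points.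
           transp_mult (Tmat (m - j + 1)) (Fmat m j) X Y = \<alpha> * E1mat X Y)) \<and>
     (\<forall>h. 1 \<le> h \<and> h < m - j + 1 \<longrightarrow>
        (\<forall>X\<in>(pg_points :: ('a ^ 'n) set set). \<forall>Y\<in>pg_points.
           transp_mult (Tmat h) (Fmat m j) X Y = 0))"
proof (rule ballI, rule conjI)
  fix j assume j: "j \<in> {1..m}"
  hence j1: "1 \<le> j" and j2: "j \<le> m" by auto
  show "\<forall>h. 1 \<le> h \<and> h < m - j + 1 \<longrightarrow>
        (\<forall>X\<in>(pg_points :: ('a ^ 'n) set set). \<forall>Y\<in>pg_points.
           transp_mult (Tmat h) (Fmat m j) X Y = 0)"
    using main_zero[OF _ _ assms(2) j1 j2] by blast
next
  fix j assume j: "j \<in> {1..m}"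
  hence j1: "1 \<le> j" and j2: "j \<le> m" by auto
  define s where "s = m - j + 1"
  define q where "q = real CARD('a)"
  have q: "q > 1" unfolding q_def using card_field_gt1 by simp
  have n2: "CARD('n) \<ge> 2" using assms by simp
  have s: "1 \<le> s" "s \<le> CARD('n) - 1" "m - j + 2 = s + 1" using assms j1 j2 unfolding s_def by auto
  obtain c0 where c0: "c0 \<in> (max_flags :: ('a ^ 'n) set list set)" using exists_flag by blast
  define X0 where "X0 = UU c0 1"
  have X0: "X0 \<in> pg_points" unfolding X0_def pg_points_def
    using UU_subspace[OF c0] UU_dim[OF c0, of 1] n2 by simp
  obtain Y0 where Y0: "Y0 \<in> pg_points" "Y0 \<noteq> X0" using exists_point_ne[OF X0 n2] by blast
  define d where "d = Phi s X0 X0"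
  define e where "e = Phi s X0 Y0"
  define p where "p = real (card (pg_points :: ('a ^ 'n) set set))"
  have dpos: "d > 0"
  proof -
    have sN: "s \<le> CARD('n)" using s by simp
    obtain c where c: "c \<in> max_flags" "flag_type c X0 = s" using exists_type[OF X0 s(1) sN n2] by blast
    hence "card {c \<in> max_flags. flag_type c X0 = s} > 0"
      using finite_flags by (subst card_gt_0_iff) auto
    thus ?thesis unfolding d_def Phi_diag using q unfolding q_def by simp
  qed
  have diag: "Phi s X X = d" if X: "X \<in> pg_points" for X :: "('a ^ 'n) set"
  proof -
    obtain g where g: "Vector_Spaces.linear (*s) (*s) g" "inj g" "g ` X0 = X" using aut1[OF X0 X n2] by blast
    show ?thesis using Phi_inv[OF g(1,2), of s X0 X0] g(3) unfolding d_def by simp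
  qed
  have off: "Phi s X Y = e" if XY: "X \<in> pg_points" "Y \<in> pg_points" "X \<noteq> Y" for X Y :: "('a ^ 'n) set"
  proof -
    obtain g where g: "Vector_Spaces.linear (*s) (*s) g" "inj g" "g ` X0 = X" "g ` Y0 = Y"
      using aut2[OF X0 Y0(1) XY(1,2)] Y0(2) XY(3) by metis
    show ?thesis using Phi_inv[OF g(1,2), of s X0 Y0] g(3,4) unfolding e_def by simp
  qed
  have p1: "p > 1"
  proof -
    have "card {X0, Y0} \<le> card (pg_points :: ('a ^ 'n) set set)"
      by (rule card_mono) (use X0 Y0 in auto)
    thus ?thesis unfolding p_def using Y0(2) by simp
  qed
  have rel: "d + (p - 1) * e = 0"
  proof -
    have "0 = (\<Sum>Y\<in>pg_points. Phi s X0 Y)" using Phi_rowsum[OF s(1,2)] by simp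
    also have "\<dots> = Phi s X0 X0 + (\<Sum>Y\<in>pg_points - {X0}. Phi s X0 Y)"
      by (rule sum.remove[OF finite_points X0])
    also have "(\<Sum>Y\<in>pg_points - {X0}. Phi s X0 Y) = (\<Sum>Y\<in>pg_points - {X0}. e)"
      by (rule sum.cong[OF refl]) (use off X0 in auto)
    also have "\<dots> = real (card (pg_points - {X0})) * e" by simp
    also have "real (card (pg_points - {X0})) = p - 1"
    proof -
      have "card (pg_points :: ('a ^ 'n) set set) \<ge> 1"
        using X0 finite_points card_gt_0_iff[of "pg_points :: ('a ^ 'n) set set"] by fastforce
      thus ?thesis unfolding p_def using X0 by (simp add: card_Diff_singleton of_nat_diff)
    qed
    finally show ?thesis unfolding d_def by simp
  qed
  have eval: "transp_mult (Tmat s) (Fmat m j) X Y = q ^ (j - 1) * Phi s X Y"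
    if XY: "X \<in> pg_points" "Y \<in> pg_points" for X Y :: "('a ^ 'n) set"
  proof -
    have "transp_mult (Tmat s) (Fmat m j) X Y = q ^ (j - 1) * (q * NN s s X Y - NN s (s + 1) X Y)"
      using main_s[OF XY assms(2) j1 j2] unfolding s(3) s_def[symmetric] q_def[symmetric] .
    thus ?thesis using Phi_NN[of s X Y] unfolding q_def by simp
  qed
  define \<alpha> where "\<alpha> = q ^ (j - 1) * d * p / (p - 1)"
  show "\<exists>\<alpha>::real. \<alpha> \<noteq> 0 \<and>
        (\<forall>X\<in>(pg_points :: ('a ^ 'n) set set). \<forall>Y\<in>pg_points.
           transp_mult (Tmat (m - j + 1)) (Fmat m j) X Y = \<alpha> * E1mat X Y)"
  proof (intro exI conjI ballI)
    show "\<alpha> \<noteq> 0" unfolding \<alpha>_def using q dpos p1 by simp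
    fix X Y :: "('a ^ 'n) set" assume X: "X \<in> pg_points" and Y: "Y \<in> pg_points"
    have E: "E1mat X Y = (if X = Y then 1 else 0) - 1 / p" unfolding E1mat_def p_def by simp
    show "transp_mult (Tmat (m - j + 1)) (Fmat m j) X Y = \<alpha> * E1mat X Y"
    proof (cases "X = Y")
      case True
      have "transp_mult (Tmat (m - j + 1)) (Fmat m j) X Y = q ^ (j - 1) * d"
        using eval[OF X Y] diag[OF X] True unfolding s_def by simp
      also have "\<dots> = \<alpha> * E1mat X Y" unfolding E \<alpha>_def using True p1 by (simp add: field_simps)
      finally show ?thesis .
    next
      case False
      have ee: "e = - d / (p - 1)" using rel p1 by (simp add: field_simps)
      have "transp_mult (Tmat (m - j + 1)) (Fmat m j) X Y = q ^ (j - 1) * e"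
        using eval[OF X Y] off[OF X Y False] unfolding s_def by simp
      also have "\<dots> = \<alpha> * E1mat X Y" unfolding E \<alpha>_def ee using False p1 by (simp add: field_simps)
      finally show ?thesis .
    qed
  qed
qed


end
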